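(* Let $n\geq 2$, and let $0<x_1<\cdots<x_n$ and $0<y_1<\cdots<y_n$ be real numbers. Let $S=[1+x_iy_j]_{i,j=1}^n$. For $2\leq i\leq n$ let \[ \alpha_i=\frac{1+y_1x_i}{1+y_1x_{i-1}},\qquad \alpha_i'=\frac{1+x_1y_i}{1+x_1y_{i-1}}, \] and for $3\leq j\leq n$ let \[ \beta_j=\frac{(x_j-x_{j-1})(1+y_1x_{j-2})}{(x_{j-1}-x_{j-2})(1+y_1x_{j-1})},\qquad \beta_j'=\frac{(y_j-y_{j-1})(1+x_1y_{j-2})}{(y_{j-1}-y_{j-2})(1+x_1y_{j-1})}. \] Let $D$ be the $n\times n$ diagonal matrix with $D_{11}=1+x_1y_1$, $D_{22}=\dfrac{(x_2-x_1)(y_2-y_1)}{1+x_1y_1}$, and $D_{kk}=0$ for $3\leq k\leq n$. Then \[ S=\big(L_n(\alpha_n)\cdots L_2(\alpha_2)\big)\big(L_n(\beta_n)\cdots L_3(\beta_3)\big)\,D\,\big(U_3(\beta_3')\cdots U_n(\beta_n')\big)\big(U_2(\alpha_2')\cdots U_n(\alpha_n')\big). \]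
   Context: For a real number $s$ and $2\leq i\leq n$, $L_i(s)$ denotes the $n\times n$ matrix with all diagonal entries equal to $1$, $(i,i-1)$ entry equal to $s$, and all other entries zero; $U_i(s)$ denotes the $n\times n$ matrix with all diagonal entries equal to $1$, $(i-1,i)$ entry equal to $s$, and all other entries zero (elementary bidiagonal matrices). Empty products (e.g. when $n=2$) are the identity matrix. *)

theory Defs
  imports "Jordan_Normal_Form.Matrix"
begin

text \<open>The elementary
bidiagonal matrices use the paper's 1-based index i (2 <= i <= n):
L_i(s) has entry s at 1-based position (i,i-1), i.e. 0-based (i-1,i-2);
U_i(s) has entry s at 1-based position (i-1,i), i.e. 0-based (i-2,i-1).\<close>

definition Lmat :: "nat \<Rightarrow> nat \<Rightarrow> real \<Rightarrow> real mat" where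
  "Lmat n i s = mat n n (\<lambda>(r, c). if r = c then 1 else if r + 1 = i \<and> c + 2 = i then s else 0)"

definition Umat :: "nat \<Rightarrow> nat \<Rightarrow> real \<Rightarrow> real mat" where
  "Umat n i s = mat n n (\<lambda>(r, c). if r = c then 1 else if r + 2 = i \<and> c + 1 = i then s else 0)"

definition mprod :: "nat \<Rightarrow> real mat list \<Rightarrow> real mat" where
  "mprod n Ms = foldr (*) Ms (1\<^sub>m n)"

end

theory Submission imports Defs begin

lemma Lmat_carrier[simp]: "Lmat n i s \<in> carrier_mat n n" by (simp add: Lmat_def)
lemma Umat_carrier[simp]: "Umat n i s \<in> carrier_mat n n" by (simp add: Umat_def)
lemma Umat_transpose: "Umat n i s = transpose_mat (Lmat n i s)"
  by (rule eq_matI) (auto simp: Umat_def Lmat_def)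

lemma mprod_carrier: "set Ms \<subseteq> carrier_mat n n \<Longrightarrow> mprod n Ms \<in> carrier_mat n n"
  by (induction Ms) (auto simp: mprod_def)

lemma mprod_Cons: "mprod n (M # Ms) = M * mprod n Ms" by (simp add: mprod_def)
lemma mprod_Nil: "mprod n [] = 1\<^sub>m n" by (simp add: mprod_def)

lemma mprod_append: "set Ms \<subseteq> carrier_mat n n \<Longrightarrow> set Ns \<subseteq> carrier_mat n n \<Longrightarrow>
  mprod n (Ms @ Ns) = mprod n Ms * mprod n Ns"
proof (induction Ms)
  case Nil then show ?case using mprod_carrier[of Ns n] by (simp add: mprod_def)
next
  case (Cons M Ms)
  have "M \<in> carrier_mat n n" "mprod n Ms \<in> carrier_mat n n" "mprod n Ns \<in> carrier_mat n n"
    using Cons.prems mprod_carrier by auto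
  then show ?case using Cons by (simp add: mprod_Cons)
qed

lemma mprod_transpose: "set Ms \<subseteq> carrier_mat n n \<Longrightarrow>
   mprod n (map transpose_mat Ms) = transpose_mat (mprod n (rev Ms))"
proof (induction Ms)
  case Nil then show ?case by (simp add: mprod_def)
next
  case (Cons M Ms)
  have c: "M \<in> carrier_mat n n" "set Ms \<subseteq> carrier_mat n n" using Cons.prems by auto
  have "mprod n (rev (M # Ms)) = mprod n (rev Ms) * M"
    using c by (simp add: mprod_append mprod_Cons mprod_Nil)
  then show ?case using Cons c mprod_carrier[of "rev Ms" n]
    by (simp add: mprod_Cons transpose_mult)
qed

lemma L_mult_entry:
  assumes "B \<in> carrier_mat n k" "r < n" "c < k"
  shows "(Lmat n i s * B) $$ (r,c) = B$$(r,c) + (if r+1 = i \<and> r \<ge> 1 then s * B$$(r-1,c) else 0)"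
proof -
  have "(Lmat n i s * B) $$ (r,c) = (\<Sum>j<n. (if r = j then 1 else if r + 1 = i \<and> j + 2 = i then s else 0) * B$$(j,c))"
    using assms by (simp add: Lmat_def scalar_prod_def lessThan_atLeast0)
  also have "\<dots> = (\<Sum>j<n. (if j = r then B$$(j,c) else 0) + (if r+1 = i \<and> r \<ge> 1 then (if j = r - 1 then s * B$$(j,c) else 0) else 0))"
    by (rule sum.cong) auto
  also have "\<dots> = B$$(r,c) + (if r+1 = i \<and> r \<ge> 1 then s * B$$(r-1,c) else 0)"
    using assms by (cases "r+1 = i \<and> r \<ge> 1") (auto simp: sum.distrib)
  finally show ?thesis .
qed

definition Lcf :: "nat \<Rightarrow> nat \<Rightarrow> (nat \<Rightarrow> real) \<Rightarrow> real mat" where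
  "Lcf n m a = mat n n (\<lambda>(r,c). if c \<le> r \<and> r < m then prod a {c+2..r+1} else if r = c then 1 else 0)"

lemma Lprod: "m \<le> n \<Longrightarrow> mprod n (map (\<lambda>i. Lmat n i (a i)) (rev [2..<Suc m])) = Lcf n m a"
proof (induction m)
  case 0
  then show ?case by (intro eq_matI) (auto simp: Lcf_def mprod_Nil)
next
  case (Suc m)
  show ?case
  proof (cases "m = 0")
    case True
    then show ?thesis by (intro eq_matI) (auto simp: Lcf_def mprod_Nil)
  next
    case False
    have l: "rev [2..<Suc (Suc m)] = Suc m # rev [2..<Suc m]" using False by simp
    have IH: "mprod n (map (\<lambda>i. Lmat n i (a i)) (rev [2..<Suc m])) = Lcf n m a"
      using Suc by simp
    have C: "Lcf n m a \<in> carrier_mat n n" by (simp add: Lcf_def)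
    show ?thesis
      unfolding l list.map mprod_Cons IH
    proof (rule eq_matI)
      fix r c assume rc: "r < dim_row (Lcf n (Suc m) a)" "c < dim_col (Lcf n (Suc m) a)"
      then have rc': "r < n" "c < n" by (auto simp: Lcf_def)
      have E: "(Lmat n (Suc m) (a (Suc m)) * Lcf n m a) $$ (r, c) = Lcf n m a $$ (r,c) + (if r+1 = Suc m \<and> r \<ge> 1 then a (Suc m) * Lcf n m a $$ (r-1,c) else 0)"
        by (rule L_mult_entry[OF C rc'])
      have "Lcf n m a $$ (r,c) + (if r+1 = Suc m \<and> r \<ge> 1 then a (Suc m) * Lcf n m a $$ (r-1,c) else 0) = Lcf n (Suc m) a $$ (r, c)"
      proof (cases "r = m")
        case True
        have "a (Suc m) * prod a {c + 2..m} = prod a {c + 2..Suc m}" if "c < m"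
          using that by (simp add: prod.cl_ivl_Suc mult.commute)
        then show ?thesis using True rc' False Suc.prems
          by (auto simp: Lcf_def)
      next
        case F: False
        then show ?thesis using rc' False Suc.prems
          by (auto simp: Lcf_def)
      qed
      with E show "(Lmat n (Suc m) (a (Suc m)) * Lcf n m a) $$ (r, c) = Lcf n (Suc m) a $$ (r, c)" by simp
    qed (auto simp: Lcf_def Lmat_def)
  qed
qed

lemma prod_tele:
  fixes g :: "nat \<Rightarrow> real"
  assumes "\<forall>i. c+1 \<le> i \<and> i \<le> r+1 \<longrightarrow> g i \<noteq> 0" "c \<le> r"
  shows "prod (\<lambda>i. g i / g (i-1)) {c+2..r+1} = g (r+1) / g (c+1)"
  using assms
proof (induction r)
  case 0 then show ?case by simp
next
  case (Suc r)
  show ?case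
  proof (cases "c = Suc r")
    case True then show ?thesis using Suc.prems by simp
  next
    case False
    then have "c \<le> r" using Suc.prems by simp
    then have IH: "prod (\<lambda>i. g i / g (i-1)) {c+2..r+1} = g (r+1) / g (c+1)" using Suc by simp
    have nz: "g (r+1) \<noteq> 0" "g (c+1) \<noteq> 0" using Suc.prems \<open>c \<le> r\<close> by auto
    have "prod (\<lambda>i. g i / g (i-1)) {c+2..Suc r+1} = prod (\<lambda>i. g i / g (i-1)) {c+2..r+1} * (g (r+2) / g (r+1))"
      using \<open>c \<le> r\<close> by (simp add: prod.cl_ivl_Suc)
    then show ?thesis using IH nz by simp
  qed
qed

lemma tele_step:
  fixes p q w t :: real
  assumes "1 + t*p \<noteq> 0" "1 + t*q \<noteq> 0" "1 + t*w \<noteq> 0"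
  shows "(q - p) / ((1 + t*p) * (1 + t*q)) + (w - q) / ((1 + t*q) * (1 + t*w)) = (w - p) / ((1 + t*p) * (1 + t*w))"
proof -
  have "(q - p) * (1 + t*w) + (w - q) * (1 + t*p) = (w - p) * (1 + t*q)" by (simp add: algebra_simps)
  then show ?thesis using assms by (simp add: divide_simps)
qed

lemma sum_tele:
  fixes x :: "nat \<Rightarrow> real" and t :: real
  assumes "\<forall>i. 1 \<le> i \<and> i \<le> r+1 \<longrightarrow> 1 + t * x i \<noteq> 0"
  shows "(\<Sum>k\<in>{1..r}. (x (k+1) - x k) / ((1 + t * x k) * (1 + t * x (k+1))))
     = (x (r+1) - x 1) / ((1 + t * x 1) * (1 + t * x (r+1)))"
  using assms
proof (induction r)
  case 0 then show ?case by simp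
next
  case (Suc r)
  have nz: "1 + t * x 1 \<noteq> 0" "1 + t * x (r+1) \<noteq> 0" "1 + t * x (r+2) \<noteq> 0" using Suc.prems by auto
  have "(\<Sum>k\<in>{1..Suc r}. (x (k+1) - x k) / ((1 + t * x k) * (1 + t * x (k+1))))
     = (x (r+1) - x 1) / ((1 + t * x 1) * (1 + t * x (r+1))) + (x (r+2) - x (r+1)) / ((1 + t * x (r+1)) * (1 + t * x (r+2)))"
    using Suc by simp
  also have "\<dots> = (x (r+2) - x 1) / ((1 + t * x 1) * (1 + t * x (r+2)))"
    using tele_step[OF nz] by simp
  finally show ?case by simp
qed

lemma div_rearr: "((a::real)*b)/(c*d) = (a/d)/(c/b)"
  by (simp add: divide_inverse mult_ac)

lemma Lcf_entry: "r < n \<Longrightarrow> k < n \<Longrightarrow> Lcf n n a $$ (r,k) = (if k \<le> r then prod a {k+2..r+1} else 0)"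
  by (auto simp: Lcf_def)

lemma colMB:
  fixes x :: "nat \<Rightarrow> real" and t :: real
  assumes n2: "n \<ge> 2" and t: "t > 0"
    and pos: "\<forall>i. 1 \<le> i \<and> i \<le> n \<longrightarrow> x i > 0"
    and mono: "\<forall>i. 1 \<le> i \<and> i < n \<longrightarrow> x i < x (Suc i)"
    and r: "r < n"
  defines "\<alpha> \<equiv> \<lambda>i. (1 + t * x i) / (1 + t * x (i-1))"
    and "\<beta> \<equiv> \<lambda>j. ((x j - x (j - 1)) * (1 + t * x (j - 2))) / ((x (j - 1) - x (j - 2)) * (1 + t * x (j - 1)))"
  shows "(mprod n (map (\<lambda>i. Lmat n i (\<alpha> i)) (rev [2..<Suc n])) * mprod n (map (\<lambda>j. Lmat n j (\<beta> j)) (rev [3..<Suc n]))) $$ (r,0)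
          = (1 + t * x (r+1)) / (1 + t * x 1)"
    and "(mprod n (map (\<lambda>i. Lmat n i (\<alpha> i)) (rev [2..<Suc n])) * mprod n (map (\<lambda>j. Lmat n j (\<beta> j)) (rev [3..<Suc n]))) $$ (r,1)
          = (x (r+1) - x 1) / (x 2 - x 1)"
proof -
  define G where "G = (\<lambda>i. 1 + t * x i)"
  define h where "h = (\<lambda>j. (x j - x (j-1)) / G (j-1))"
  define \<beta>0 where "\<beta>0 = (\<lambda>j. if j = 2 then 0 else \<beta> j)"
  have Gpos: "G i > 0" if "1 \<le> i" "i \<le> n" for i
    using pos that t unfolding G_def by (simp add: add_pos_pos)
  have xlt: "x (i-1) < x i" if "2 \<le> i" "i \<le> n" for i
  proof -
    have "1 \<le> i-1 \<and> i-1 < n" using that by auto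
    then have "x (i-1) < x (Suc (i-1))" using mono by blast
    then show ?thesis using that by simp
  qed
  have M: "mprod n (map (\<lambda>i. Lmat n i (\<alpha> i)) (rev [2..<Suc n])) = Lcf n n \<alpha>"
    by (rule Lprod) simp
  have l: "rev [2..<Suc n] = rev [3..<Suc n] @ [2]" using n2
  proof -
    have "[2..<Suc n] = 2 # [Suc 2..<Suc n]" using n2 by (simp add: upt_conv_Cons)
    then show ?thesis by simp
  qed
  have L20: "Lmat n 2 0 = 1\<^sub>m n" by (rule eq_matI) (auto simp: Lmat_def)
  have mp: "map (\<lambda>j. Lmat n j (\<beta>0 j)) (rev [3..<Suc n]) = map (\<lambda>j. Lmat n j (\<beta> j)) (rev [3..<Suc n])"
    by (rule map_cong) (auto simp: \<beta>0_def)
  have B: "mprod n (map (\<lambda>j. Lmat n j (\<beta> j)) (rev [3..<Suc n])) = Lcf n n \<beta>0"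
  proof -
    have "Lcf n n \<beta>0 = mprod n (map (\<lambda>j. Lmat n j (\<beta>0 j)) (rev [2..<Suc n]))"
      by (rule Lprod[symmetric]) simp
    also have "\<dots> = mprod n (map (\<lambda>j. Lmat n j (\<beta>0 j)) (rev [3..<Suc n])) * mprod n [Lmat n 2 (\<beta>0 2)]"
      unfolding l map_append list.map by (rule mprod_append) auto
    also have "\<dots> = mprod n (map (\<lambda>j. Lmat n j (\<beta> j)) (rev [3..<Suc n]))"
    proof -
      have o: "mprod n [Lmat n 2 (\<beta>0 2)] = 1\<^sub>m n" by (simp add: \<beta>0_def L20 mprod_Cons mprod_Nil)
      have c: "mprod n (map (\<lambda>j. Lmat n j (\<beta> j)) (rev [3..<Suc n])) \<in> carrier_mat n n"
        by (rule mprod_carrier) auto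
      show ?thesis unfolding o mp using c by simp
    qed
    finally show ?thesis by simp
  qed
  have entry: "(Lcf n n \<alpha> * Lcf n n \<beta>0) $$ (r,c) = (\<Sum>k<n. Lcf n n \<alpha> $$ (r,k) * Lcf n n \<beta>0 $$ (k,c))"
    if "c < n" for c
    using that r by (simp add: Lcf_def scalar_prod_def lessThan_atLeast0)
  have aprod: "prod \<alpha> {k+2..r+1} = G (r+1) / G (k+1)" if "k \<le> r" for k
  proof -
    have "prod (\<lambda>i. G i / G (i-1)) {k+2..r+1} = G (r+1) / G (k+1)"
    proof (rule prod_tele)
      show "\<forall>i. k + 1 \<le> i \<and> i \<le> r + 1 \<longrightarrow> G i \<noteq> 0"
      proof (intro allI impI)
        fix i assume "k + 1 \<le> i \<and> i \<le> r + 1"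
        then have "G i > 0" using Gpos r by auto
        then show "G i \<noteq> 0" by simp
      qed
    qed (use that in auto)
    then show ?thesis unfolding \<alpha>_def G_def by simp
  qed
  show "(mprod n (map (\<lambda>i. Lmat n i (\<alpha> i)) (rev [2..<Suc n])) * mprod n (map (\<lambda>j. Lmat n j (\<beta> j)) (rev [3..<Suc n]))) $$ (r,0)
          = (1 + t * x (r+1)) / (1 + t * x 1)"
  proof -
    have "(\<Sum>k<n. Lcf n n \<alpha> $$ (r,k) * Lcf n n \<beta>0 $$ (k,0)) = (\<Sum>k<n. if k = 0 then prod \<alpha> {2..r+1} else 0)"
    proof (rule sum.cong)
      fix k assume k: "k \<in> {..<n}"
      have z: "Lcf n n \<beta>0 $$ (k,0) = (if k = 0 then 1 else 0)"
      proof (cases "k = 0")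
        case True then show ?thesis using n2 by (simp add: Lcf_entry)
      next
        case False
        have "prod \<beta>0 {2..k+1} = 0"
          by (rule prod_zero) (use False in \<open>auto simp: \<beta>0_def intro!: bexI[of _ 2]\<close>)
        then show ?thesis using False k by (simp add: Lcf_entry numeral_2_eq_2 del: prod_zero_iff)
      qed
      have a: "Lcf n n \<alpha> $$ (r,0) = prod \<alpha> {2..r+1}" using r by (simp add: Lcf_entry numeral_2_eq_2)
      show "Lcf n n \<alpha> $$ (r,k) * Lcf n n \<beta>0 $$ (k,0) = (if k = 0 then prod \<alpha> {2..r+1} else 0)"
        unfolding z using a by simp
    qed simp
    also have "\<dots> = G (r+1) / G 1" using aprod[of 0] r n2 by (simp add: numeral_2_eq_2 del: prod.cl_ivl_Suc)
    finally show ?thesis using M B entry[of 0] n2 by (simp add: G_def)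
  qed
  show "(mprod n (map (\<lambda>i. Lmat n i (\<alpha> i)) (rev [2..<Suc n])) * mprod n (map (\<lambda>j. Lmat n j (\<beta> j)) (rev [3..<Suc n]))) $$ (r,1)
          = (x (r+1) - x 1) / (x 2 - x 1)"
  proof -
    have bprod: "prod \<beta>0 {3..k+1} = h (k+1) / h 2" if "1 \<le> k" "k < n" for k
    proof -
      have "prod \<beta>0 {3..k+1} = prod (\<lambda>i. h i / h (i-1)) {1+2..k+1}"
      proof (rule prod.cong)
        fix j assume j: "j \<in> {1+2..k+1}"
        then have j': "3 \<le> j" "j \<le> n" using that by auto
        have nz: "G (j-1) > 0" "G (j-2) > 0" using Gpos j' by auto
        have d: "x j - x (j-1) > 0" "x (j-1) - x (j-2) > 0"
          using xlt[of j] xlt[of "j-1"] j' by (auto simp: numeral_eq_Suc)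
        have e: "j - 1 - 1 = j - 2" by simp
        have "\<beta>0 j = ((x j - x (j-1)) * G (j-2)) / ((x (j-1) - x (j-2)) * G (j-1))"
          using j' by (simp add: \<beta>0_def \<beta>_def G_def)
        also have "\<dots> = h j / h (j-1)" unfolding h_def e by (rule div_rearr)
        finally show "\<beta>0 j = h j / h (j-1)" .
      qed simp
      also have "\<dots> = h (k+1) / h (1+1)"
      proof (rule prod_tele)
        show "\<forall>i. 1 + 1 \<le> i \<and> i \<le> k + 1 \<longrightarrow> h i \<noteq> 0"
        proof (intro allI impI)
          fix i assume "1 + 1 \<le> i \<and> i \<le> k + 1"
          then have i: "2 \<le> i" "i \<le> n" "1 \<le> i - 1" "i - 1 \<le> n" using that by auto
          have "G (i-1) > 0" by (rule Gpos) (use i in auto)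
          moreover have "x (i-1) < x i" by (rule xlt) (use i in auto)
          ultimately show "h i \<noteq> 0" unfolding h_def by simp
        qed
      qed (use that in auto)
      finally show ?thesis by (simp only: one_add_one)
    qed
    have "(\<Sum>k<n. Lcf n n \<alpha> $$ (r,k) * Lcf n n \<beta>0 $$ (k,1))
        = (\<Sum>k<n. if k \<in> {1..r} then G (r+1) * (G 1 / (x 2 - x 1)) * ((x (k+1) - x k) / (G k * G (k+1))) else 0)"
    proof (rule sum.cong)
      fix k assume k: "k \<in> {..<n}"
      show "Lcf n n \<alpha> $$ (r,k) * Lcf n n \<beta>0 $$ (k,1) = (if k \<in> {1..r} then G (r+1) * (G 1 / (x 2 - x 1)) * ((x (k+1) - x k) / (G k * G (k+1))) else 0)"
      proof (cases "k \<in> {1..r}")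
        case True
        have g: "G k > 0" "G (k+1) > 0" "G 1 > 0" using Gpos True r by auto
        have "x 1 < x 2" using xlt[of 2] n2 by simp
        have e1: "Lcf n n \<alpha> $$ (r,k) = G (r+1) / G (k+1)"
          using Lcf_entry[of r n k \<alpha>] aprod[of k] True r k by (simp del: prod.cl_ivl_Suc)
        have e2: "Lcf n n \<beta>0 $$ (k,1) = h (k+1) / h 2"
          using Lcf_entry[of k n 1 \<beta>0] bprod[of k] True r k by (simp add: numeral_3_eq_3 del: prod.cl_ivl_Suc)
        have h2: "h 2 = (x 2 - x 1) / G 1" unfolding h_def by simp
        show ?thesis unfolding e1 e2 h2 using True g \<open>x 1 < x 2\<close> by (simp add: h_def field_simps)
      next
        case False
        then show ?thesis using k r n2 by (auto simp: Lcf_entry)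
      qed
    qed simp
    also have "\<dots> = G (r+1) * (G 1 / (x 2 - x 1)) * (\<Sum>k\<in>{1..r}. (x (k+1) - x k) / (G k * G (k+1)))"
    proof -
      have "{..<n} \<inter> {1..r} = {1..r}" using r by auto
      then show ?thesis
        using sum.inter_restrict[of "{..<n}" "\<lambda>k. G (r+1) * (G 1 / (x 2 - x 1)) * ((x (k+1) - x k) / (G k * G (k+1)))" "{1..r}"]
        by (simp add: sum_distrib_left)
    qed
    also have "\<dots> = G (r+1) * (G 1 / (x 2 - x 1)) * ((x (r+1) - x 1) / (G 1 * G (r+1)))"
    proof -
      have "\<forall>i. 1 \<le> i \<and> i \<le> r+1 \<longrightarrow> 1 + t * x i \<noteq> 0"
      proof (intro allI impI)
        fix i assume "1 \<le> i \<and> i \<le> r+1"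
        then have "G i > 0" using Gpos r by auto
        then show "1 + t * x i \<noteq> 0" unfolding G_def by simp
      qed
      note st = sum_tele[of r t x, OF this]
      show ?thesis unfolding G_def st ..
    qed
    also have "\<dots> = (x (r+1) - x 1) / (x 2 - x 1)"
    proof -
      have "x 1 < x 2" using xlt[of 2] n2 by simp
      then show ?thesis using Gpos[of 1] Gpos[of "r+1"] r n2 by (simp add: field_simps)
    qed
    finally show ?thesis using M B entry[of 1] n2 by simp
  qed
qed

lemma Uprod: "mprod n (map (\<lambda>i. Umat n i (f i)) xs) = transpose_mat (mprod n (map (\<lambda>i. Lmat n i (f i)) (rev xs)))"
proof -
  have "map (\<lambda>i. Umat n i (f i)) xs = map transpose_mat (map (\<lambda>i. Lmat n i (f i)) xs)"
    by (induction xs) (simp_all add: Umat_transpose)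
  also have "mprod n \<dots> = transpose_mat (mprod n (rev (map (\<lambda>i. Lmat n i (f i)) xs)))"
    by (rule mprod_transpose) auto
  finally show ?thesis by (simp add: rev_map)
qed

lemma final_alg:
  fixes X1 X2 Xr Y1 Y2 Yc :: real
  assumes "1 + Y1 * X1 > 0" "X1 < X2" "Y1 < Y2"
  shows "(1 + Y1 * Xr) / (1 + Y1 * X1) * ((1 + X1 * Y1) * ((1 + X1 * Yc) / (1 + X1 * Y1)))
       + (Xr - X1) / (X2 - X1) * ((X2 - X1) * (Y2 - Y1) / (1 + X1 * Y1) * ((Yc - Y1) / (Y2 - Y1)))
       = 1 + Xr * Yc"
proof -
  have a: "1 + X1 * Y1 \<noteq> 0" "X2 - X1 \<noteq> 0" "Y2 - Y1 \<noteq> 0" using assms by (auto simp: mult.commute)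
  have k: "(1 + Y1 * Xr) * (1 + X1 * Yc) + (Xr - X1) * (Yc - Y1) = (1 + Xr * Yc) * (1 + X1 * Y1)"
    by (simp add: algebra_simps)
  have c: "1 + Y1 * X1 = 1 + X1 * Y1" by (simp add: mult.commute)
  have t1: "(1 + Y1 * Xr) / (1 + Y1 * X1) * ((1 + X1 * Y1) * ((1 + X1 * Yc) / (1 + X1 * Y1))) = (1 + Y1 * Xr) * (1 + X1 * Yc) / (1 + X1 * Y1)"
    unfolding c using a by simp
  have t2: "(Xr - X1) / (X2 - X1) * ((X2 - X1) * (Y2 - Y1) / (1 + X1 * Y1) * ((Yc - Y1) / (Y2 - Y1))) = (Xr - X1) * (Yc - Y1) / (1 + X1 * Y1)"
    using a by simp
  have "(1 + Y1 * Xr) * (1 + X1 * Yc) / (1 + X1 * Y1) + (Xr - X1) * (Yc - Y1) / (1 + X1 * Y1) = ((1 + Y1 * Xr) * (1 + X1 * Yc) + (Xr - X1) * (Yc - Y1)) / (1 + X1 * Y1)"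
    by (simp add: add_divide_distrib)
  also have "\<dots> = 1 + Xr * Yc" unfolding k using a by simp
  finally show ?thesis unfolding t1 t2 .
qed

lemma pos_mono:
  fixes x :: "nat \<Rightarrow> real"
  assumes "0 < x 1" "\<forall>i\<in>{1..<n}. x i < x (Suc i)"
  shows "\<forall>i. 1 \<le> i \<and> i \<le> n \<longrightarrow> x i > 0" "\<forall>i. 1 \<le> i \<and> i < n \<longrightarrow> x i < x (Suc i)"
proof -
  show "\<forall>i. 1 \<le> i \<and> i < n \<longrightarrow> x i < x (Suc i)" using assms by auto
  have "1 \<le> i \<Longrightarrow> i \<le> n \<Longrightarrow> x i > 0" for i
  proof (induction i)
    case 0 then show ?case by simp
  next
    case (Suc i)
    show ?case
    proof (cases "i = 0")
      case True then show ?thesis using assms by simp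
    next
      case False
      then have "x i > 0" using Suc by simp
      moreover have "x i < x (Suc i)" using assms(2) False Suc.prems by auto
      ultimately show ?thesis by simp
    qed
  qed
  then show "\<forall>i. 1 \<le> i \<and> i \<le> n \<longrightarrow> x i > 0" by blast
qed

theorem theorem2p2:
  fixes n :: nat and x y :: "nat \<Rightarrow> real"
  assumes "n \<ge> 2"
    and "0 < x 1" and "\<forall>i\<in>{1..<n}. x i < x (Suc i)"
    and "0 < y 1" and "\<forall>i\<in>{1..<n}. y i < y (Suc i)"
  shows
   "let S = mat n n (\<lambda>(i, j). 1 + x (i + 1) * y (j + 1));
        \<alpha> = (\<lambda>i. (1 + y 1 * x i) / (1 + y 1 * x (i - 1)));
        \<alpha>' = (\<lambda>i. (1 + x 1 * y i) / (1 + x 1 * y (i - 1)));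
        \<beta> = (\<lambda>j. ((x j - x (j - 1)) * (1 + y 1 * x (j - 2))) /
                  ((x (j - 1) - x (j - 2)) * (1 + y 1 * x (j - 1))));
        \<beta>' = (\<lambda>j. ((y j - y (j - 1)) * (1 + x 1 * y (j - 2))) /
                  ((y (j - 1) - y (j - 2)) * (1 + x 1 * y (j - 1))));
        D = mat_diag n (\<lambda>k. if k = 0 then 1 + x 1 * y 1
                            else if k = 1 then (x 2 - x 1) * (y 2 - y 1) / (1 + x 1 * y 1)
                            else 0)
    in S = mprod n (map (\<lambda>i. Lmat n i (\<alpha> i)) (rev [2..<Suc n]))
         * mprod n (map (\<lambda>j. Lmat n j (\<beta> j)) (rev [3..<Suc n]))
         * D
         * mprod n (map (\<lambda>j. Umat n j (\<beta>' j)) [3..<Suc n])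
         * mprod n (map (\<lambda>i. Umat n i (\<alpha>' i)) [2..<Suc n])"
proof -
  note px = pos_mono[OF assms(2,3)]
  note py = pos_mono[OF assms(4,5)]
  define M where "M = mprod n (map (\<lambda>i. Lmat n i ((1 + y 1 * x i) / (1 + y 1 * x (i - 1)))) (rev [2..<Suc n]))"
  define B where "B = mprod n (map (\<lambda>j. Lmat n j (((x j - x (j - 1)) * (1 + y 1 * x (j - 2))) /
                  ((x (j - 1) - x (j - 2)) * (1 + y 1 * x (j - 1))))) (rev [3..<Suc n]))"
  define M' where "M' = mprod n (map (\<lambda>i. Lmat n i ((1 + x 1 * y i) / (1 + x 1 * y (i - 1)))) (rev [2..<Suc n]))"
  define B' where "B' = mprod n (map (\<lambda>j. Lmat n j (((y j - y (j - 1)) * (1 + x 1 * y (j - 2))) /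
                  ((y (j - 1) - y (j - 2)) * (1 + x 1 * y (j - 1))))) (rev [3..<Suc n]))"
  define d where "d = (\<lambda>k::nat. if k = 0 then 1 + x 1 * y 1
                            else if k = 1 then (x 2 - x 1) * (y 2 - y 1) / (1 + x 1 * y 1)
                            else (0::real))"
  have cM: "M \<in> carrier_mat n n" "B \<in> carrier_mat n n" "M' \<in> carrier_mat n n" "B' \<in> carrier_mat n n"
    unfolding M_def B_def M'_def B'_def by (auto intro!: mprod_carrier)
  have UM: "mprod n (map (\<lambda>i. Umat n i ((1 + x 1 * y i) / (1 + x 1 * y (i - 1)))) [2..<Suc n]) = transpose_mat M'"
    unfolding M'_def by (rule Uprod)
  have UB: "mprod n (map (\<lambda>j. Umat n j (((y j - y (j - 1)) * (1 + x 1 * y (j - 2))) /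
                  ((y (j - 1) - y (j - 2)) * (1 + x 1 * y (j - 1))))) [3..<Suc n]) = transpose_mat B'"
    unfolding B'_def by (rule Uprod)
  have main: "mat n n (\<lambda>(i, j). 1 + x (i + 1) * y (j + 1)) = M * B * mat_diag n d * transpose_mat B' * transpose_mat M'"
  proof -
    have "M * B * mat_diag n d * transpose_mat B' * transpose_mat M' = (M * B) * (mat_diag n d * transpose_mat (M' * B'))"
    proof -
      have c1: "M * B \<in> carrier_mat n n" "mat_diag n d \<in> carrier_mat n n"
        "transpose_mat B' \<in> carrier_mat n n" "transpose_mat M' \<in> carrier_mat n n" using cM by auto
      have "M * B * mat_diag n d * transpose_mat B' * transpose_mat M' = (M * B * mat_diag n d) * (transpose_mat B' * transpose_mat M')"
        by (rule assoc_mult_mat[OF _ c1(3) c1(4), of _ n]) (use c1 in auto)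
      also have "\<dots> = (M * B) * (mat_diag n d * (transpose_mat B' * transpose_mat M'))"
        by (rule assoc_mult_mat[OF c1(1) c1(2)]) (use c1 in auto)
      also have "transpose_mat B' * transpose_mat M' = transpose_mat (M' * B')"
        using cM by (simp add: transpose_mult[of M' n n B' n])
      finally show ?thesis .
    qed
    also have "\<dots> = mat n n (\<lambda>(i, j). 1 + x (i + 1) * y (j + 1))"
    proof (rule eq_matI)
      fix r c assume rc: "r < dim_row (mat n n (\<lambda>(i, j). 1 + x (i + 1) * y (j + 1)))"
          "c < dim_col (mat n n (\<lambda>(i, j). 1 + x (i + 1) * y (j + 1)))"
      then have r: "r < n" and c: "c < n" by auto
      have cP: "M * B \<in> carrier_mat n n" "M' * B' \<in> carrier_mat n n" using cM by auto
      have DX: "mat_diag n d * transpose_mat (M' * B') = mat n n (\<lambda>(i,j). d i * transpose_mat (M' * B') $$ (i,j))"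
        by (rule mat_diag_mult_left) (use cP in auto)
      have "((M * B) * (mat_diag n d * transpose_mat (M' * B'))) $$ (r,c)
          = (\<Sum>k<n. (M * B) $$ (r,k) * (d k * (M' * B') $$ (c,k)))"
      proof -
        have dm: "dim_row (M * B) = n" "dim_col (M * B) = n" "dim_row (M' * B') = n" "dim_col (M' * B') = n"
          using cP by auto
        show ?thesis unfolding DX using dm r c
          by (auto simp: scalar_prod_def lessThan_atLeast0 intro!: sum.cong)
      qed
      also have "\<dots> = (\<Sum>k\<in>{0,1}. (M * B) $$ (r,k) * (d k * (M' * B') $$ (c,k)))"
        by (rule sum.mono_neutral_right) (use assms(1) in \<open>auto simp: d_def\<close>)
      also have "\<dots> = (M * B) $$ (r,0) * (d 0 * (M' * B') $$ (c,0)) + (M * B) $$ (r,1) * (d 1 * (M' * B') $$ (c,1))"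
        by simp
      also have "\<dots> = 1 + x (r + 1) * y (c + 1)"
      proof -
        have e: "(M * B) $$ (r,0) = (1 + y 1 * x (r+1)) / (1 + y 1 * x 1)"
                "(M * B) $$ (r,1) = (x (r+1) - x 1) / (x 2 - x 1)"
          unfolding M_def B_def using colMB[OF assms(1) assms(4) px r] by auto
        have f: "(M' * B') $$ (c,0) = (1 + x 1 * y (c+1)) / (1 + x 1 * y 1)"
                "(M' * B') $$ (c,1) = (y (c+1) - y 1) / (y 2 - y 1)"
          unfolding M'_def B'_def using colMB[OF assms(1) assms(2) py c] by auto
        have g: "1 + y 1 * x 1 > 0" using assms by (simp add: add_pos_pos)
        have h: "x 1 < x 2" "y 1 < y 2" using assms(1) assms(3)[rule_format, of 1] assms(5)[rule_format, of 1]
          by (auto simp: numeral_2_eq_2)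
        show ?thesis unfolding e f using final_alg[OF g h, of "x (r+1)" "y (c+1)"] by (simp add: d_def)
      qed
      finally show "((M * B) * (mat_diag n d * transpose_mat (M' * B'))) $$ (r,c) = mat n n (\<lambda>(i, j). 1 + x (i + 1) * y (j + 1)) $$ (r,c)"
        using r c by simp
    qed (use cM in auto)
    finally show ?thesis by simp
  qed
  show ?thesis unfolding Let_def UM UB
    using main unfolding M_def B_def M'_def B'_def d_def .
qed

end
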